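(* Assume the standing hypotheses (H). Let $0\le K\in L^4_{\mathfrak P}$. There is $K_{2,3}\in L^2_{\mathfrak P}$ (depending on $K$) such that for every $(t,\mathbf x,y)\in\mathbf D\times\mathbb R$, $\boldsymbol\zeta\in\mathbf Z$ and $\psi>0$ with $\|\boldsymbol\zeta-\boldsymbol\zeta^0(\Sigma)\|\le K(t,\mathbf x)\psi$, $$|H^\psi_2(t,\mathbf x,y;\boldsymbol\zeta)|\le K_{2,3}(t,\mathbf x)\Big(1+\frac{-U''(y)}{U'(y)}\Big)\psi^2,\qquad |H_3(t,\mathbf x;\boldsymbol\zeta)-H_3(t,\mathbf x;\boldsymbol\zeta^0(\Sigma))|\le K_{2,3}(t,\mathbf x)\psi.$$
   Context: Setting. Fix $T>0$, $S_0>0$, $\Sigma_0>0$, $A_0\in\mathbb R$. $\Omega$: continuous paths $\omega=(\omega^S,\omega^\Sigma,\omega^A):[0,T]\to\mathbb R^3$ with $\omega_0=(S_0,\Sigma_0,A_0)$ (uniform topology, Borel $\sigma$-algebra $\mathcal F$); $S,\Sigma,A$ coordinate processes, $\mathbb F$ their raw filtration, $M_t=\sup_{u\le t}S_u$, $\mathbf X_t=(S_t,A_t,M_t,\Sigma_t)$. $\mathbf G=\mathbb R_+\times\mathbb R\times\mathbb R_+$, $\mathbf D^0=(0,T)\times\mathbf G\times\mathbb R_+$ (points $(t,\mathbf x)$, $\mathbf x=(S,A,M,\Sigma)$); $0<\underline\Sigma<\Sigma_0<\overline\Sigma$, $\mathbf D=(0,T)\times\mathbf G\times[\underline\Sigma,\overline\Sigma]$.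 $\|\cdot\|$ Euclidean norm, $\mathbf e_4$ fourth unit vector, $x^-=\max(-x,0)$. Call: $\mathcal C(t,S,\Sigma)$ with $\mathcal C_t+\frac12\Sigma^2S^2\mathcal C_{SS}=0$, $\mathcal C(T_{\mathsf C},S,\Sigma)=\mathsf C(S)$. $b^{\mathcal C}(t,\mathbf x;\boldsymbol\zeta)=\nu\mathcal C_\Sigma+\frac12S^2\mathcal C_{SS}(\sigma^2-\Sigma^2)+\sigma\eta S\mathcal C_{S\Sigma}+\frac12(\eta^2+\xi)\mathcal C_{\Sigma\Sigma}$ for $\boldsymbol\zeta=(\nu,\sigma,\eta,\xi)$. Models: $\mathfrak P^{00}$ = probability measures $P$ on $(\Omega,\mathcal F)$ with progressively measurable $\boldsymbol\zeta^P=(\nu^P,\sigma^P,\eta^P,\xi^P)$ such that $S$, $\Sigma-\int_0^\cdot\nu^P_tdt$ are continuous local $P$-martingales with $d\langle S\rangle_t=S_t^2(\sigma^P_t)^2dt$, $d\langle\Sigma\rangle_t=((\eta^P_t)^2+\xi^P_t)dt$, $d\langle S,\Sigma\rangle_t=S_t\sigma^P_t\eta^P_tdt$, $S,\Sigma>0$, $\xi^P\ge0$, $b^{\mathcal C}(t,\mathbf X_t;\boldsymbol\zeta^P_t)=0$ $dt\times P$-a.e.; for Borel $\alpha,\beta,\gamma,\delta:[0,T]\times\mathbb R^3\to\mathbb R$, $\mathfrak P^0$ = those $P$ with $dA_t=(\alpha+\frac12(\sigma^P_t)^2\beta)dt+\gamma dS_t+\delta dM_t$. $\boldsymbol\zeta^0(\Sigma)=(0,\Sigma,0,0)^\top$;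 reference model: $\boldsymbol\zeta^P_t=\boldsymbol\zeta^0(\Sigma_t)$ a.e. Non-traded option: $\mathcal V(\cdot,\Sigma)$ solves $\mathcal V_t+(\alpha+\frac12\beta\Sigma^2)\mathcal V_A+\frac12\Sigma^2S^2(\mathcal V_{SS}+2\gamma\mathcal V_{SA}+\gamma^2\mathcal V_{AA})=0$ on $(0,T)\times\mathbf G$, $\delta\mathcal V_A+\mathcal V_M=0$ on $\{S\ge M\}$, $\mathcal V(T,\cdot,\Sigma)=\mathsf V$. $\Delta=\mathcal V_S+\gamma\mathcal V_A$, $\Gamma=\mathcal V_{SS}+2\gamma\mathcal V_{SA}+\gamma^2\mathcal V_{AA}$, $\frac{\partial\Delta}{\partial\Sigma}:=\mathcal V_{S\Sigma}+\gamma\mathcal V_{A\Sigma}$. P&L: $V_t=\mathcal V(t,\mathbf X_t)$, $C_t=\mathcal C(t,S_t,\Sigma_t)$; strategies $\boldsymbol\upsilon=(\theta,\phi)$ real locally bounded progressive; $Y^{\boldsymbol\upsilon,P}_t=Y_0+V_0+\int_0^t\theta dS+\int_0^t\phi dC-V_t$. Preferences: $\Psi=\mathrm{diag}(\psi_\nu,\psi_\sigma,\psi_\eta,\psi_\xi)$, positive; a utility $U$, strategy set $\mathfrak Y$, model set $\mathfrak P\subset\mathfrak P^0$. Candidate control: $\mathbf c=(\mathcal C_\Sigma,\Sigma S^2\mathcal C_{SS},\Sigma S\mathcal C_{S\Sigma},\frac12\mathcal C_{\Sigma\Sigma})^\top$, $\mathbf v=(\mathcal V_\Sigma,\Sigma(\beta\mathcal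 V_A+S^2\Gamma),\Sigma S\frac{\partial\Delta}{\partial\Sigma},\frac12\mathcal V_{\Sigma\Sigma})^\top$; $\lambda=\frac{\mathbf c^\top\Psi\mathbf v}{\mathbf c^\top\Psi\mathbf c}$ if $\mathcal V_{\Sigma\Sigma}-\frac{\mathbf c^\top\Psi\mathbf v}{\mathbf c^\top\Psi\mathbf c}\mathcal C_{\Sigma\Sigma}\ge0$, else $\lambda=\frac{\mathbf c^\top\Psi\mathbf v-\frac14\mathcal C_{\Sigma\Sigma}\mathcal V_{\Sigma\Sigma}\psi_\xi}{\mathbf c^\top\Psi\mathbf c-\frac14\mathcal C_{\Sigma\Sigma}^2\psi_\xi}$; $\mu=\frac12(\mathcal V_{\Sigma\Sigma}-\lambda\mathcal C_{\Sigma\Sigma})^-$; $\widetilde{\boldsymbol\zeta}=\Psi(\mathbf v-\lambda\mathbf c+\mu\mathbf e_4)$; $\boldsymbol\zeta^\psi=\boldsymbol\zeta^0(\Sigma)+\widetilde{\boldsymbol\zeta}\mathbf 1_{\{\underline\Sigma<\Sigma<\overline\Sigma\}}\psi$; $\widetilde g=\mathbf v^\top\widetilde{\boldsymbol\zeta}$. Cash-equivalent PDE: for $\Sigma\in[\underline\Sigma,\overline\Sigma]$, $\widetilde w_t+(\alpha+\frac12\beta\Sigma^2)\widetilde w_A+\frac12\Sigma^2S^2(\widetilde w_{SS}+2\gamma\widetilde w_{SA}+\gamma^2\widetilde w_{AA})+\frac12\widetilde g(\cdot,\Sigma)=0$ on $(0,T)\times\mathbf G$, $\delta\widetilde w_A+\widetilde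 w_M=0$ on $\{S\ge M\}$, $\widetilde w(T,\cdot,\Sigma)=0$. $L^p_{\mathfrak P}$: Borel $K$ on $\mathbf D^0$ with $\sup_{P\in\mathfrak P}E^P[\int_0^T|K(t,\mathbf X_t)|^pdt]^{1/p}<\infty$. Candidate asymptotic model family: $(P^\psi)_{\psi\in(0,\psi_0)}\subset\mathfrak P$, $\psi_0\in(0,1)$, with $K_0\in L^4_{\mathfrak P}$ and $\|\boldsymbol\zeta^{P^\psi}_t-\boldsymbol\zeta^\psi(t,\mathbf X_t)\|\le K_0(t,\mathbf X_t)\psi^2$ $dt\times P^\psi$-a.e. Assumption (A): (a) $\exists K_{\mathfrak Y}$: $Y^{\boldsymbol\upsilon,P}>-K_{\mathfrak Y}$ $dt\times P$-a.e. for all $\boldsymbol\upsilon\in\mathfrak Y$, $P\in\mathfrak P$; (b) $\mathfrak P$ contains a candidate asymptotic model family and a reference model, and constants $\underline\nu<0<\overline\nu$, $0<\underline\sigma<\underline\Sigma$, $\overline\Sigma<\overline\sigma$, $\underline\eta<0<\overline\eta$, $\overline\xi>0$ bound $\nu^P,\sigma^P,\eta^P,\xi^P,\Sigma$ in $[\underline\nu,\overline\nu],[\underline\sigma,\overline\sigma],[\underline\eta,\overline\eta],[0,\overline\xi],[\underline\Sigma,\overline\Sigma]$ $dt\times P$-a.e. for all $P\in\mathfrak P$; (c) $T_{\mathsf C}\ge T$, $\mathcal C\in C^{1,2,2}((0,T_{\mathsf C})\times\mathbb R_+^2)\cap C([0,T_{\mathsf C}]\times\overline{\mathbb R}_+^2)$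 solves the call PDE classically for $\Sigma\in[\underline\Sigma,\overline\Sigma]$, $\mathcal C_\Sigma\ne0$ and $|\mathcal C_{\Sigma\Sigma}|\le K_{\mathcal C}(|\mathcal C_\Sigma|+|S^2\mathcal C_{SS}|+|S\mathcal C_{S\Sigma}|)$ on $(0,T)\times\mathbb R_+\times[\underline\Sigma,\overline\Sigma]$ with $K_{\mathcal C}\in L^2_{\mathfrak P}$; (d) $\mathcal V\in C^{1,2,2,1,2}(\mathbf D^0)\cap C(\overline{\mathbf D^0})$ solves the $\mathcal V$-PDE classically for $\Sigma\in[\underline\Sigma,\overline\Sigma]$, $|\mathcal V_\Sigma|,|\beta\mathcal V_A+S^2\Gamma|,|S\frac{\partial\Delta}{\partial\Sigma}|,|\mathcal V_{\Sigma\Sigma}|\le K_{\mathcal V}$ on $\mathbf D$; (e) $\widetilde w\in C^{1,2,2,1,2}(\mathbf D^0)\cap C(\overline{\mathbf D^0})$ solves the cash-equivalent PDE classically for $\Sigma\in[\underline\Sigma,\overline\Sigma]$, $0\le\widetilde w\le K_{\widetilde w}$ on $\mathbf D$, and $\widetilde w_\Sigma,S(\widetilde w_S+\gamma\widetilde w_A),\beta\widetilde w_A+S^2(\widetilde w_{SS}+2\gamma\widetilde w_{SA}+\gamma^2\widetilde w_{AA}),S(\widetilde w_{S\Sigma}+\gamma\widetilde w_{A\Sigma}),\widetilde w_{\Sigma\Sigma}\in L^4_{\mathfrak P}$; (f) $U\in C^3(\mathbb R)$, $U'>0$, $U''<0$, $-U''/U'$ nonincreasing. Additional notation. $\mathbf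 Z=[\underline\nu,\overline\nu]\times[\underline\sigma,\overline\sigma]\times[\underline\eta,\overline\eta]\times[0,\overline\xi]$. $b^{\mathcal V}(t,\mathbf x;\boldsymbol\zeta)=\nu\mathcal V_\Sigma+\frac12(\beta\mathcal V_A+S^2\Gamma)(\sigma^2-\Sigma^2)+\sigma\eta S\frac{\partial\Delta}{\partial\Sigma}+\frac12(\eta^2+\xi)\mathcal V_{\Sigma\Sigma}$. $H^\psi_2(t,\mathbf x,y;\boldsymbol\zeta)=-\frac12\begin{pmatrix}\sigma-\Sigma\\\eta\end{pmatrix}^\top\begin{pmatrix}\beta\mathcal V_A+S^2\Gamma&S\frac{\partial\Delta}{\partial\Sigma}\\S\frac{\partial\Delta}{\partial\Sigma}&\mathcal V_{\Sigma\Sigma}\end{pmatrix}\begin{pmatrix}\sigma-\Sigma\\\eta\end{pmatrix}+\frac{U''(y)}{U'(y)}b^{\mathcal V}(t,\mathbf x;\boldsymbol\zeta)\widetilde w(t,\mathbf x)\psi$. $H_3(t,\mathbf x;\boldsymbol\zeta)=\nu\widetilde w_\Sigma+(\alpha+\frac12\beta\sigma^2)\widetilde w_A+\frac12\sigma^2S^2(\widetilde w_{SS}+2\gamma\widetilde w_{SA}+\gamma^2\widetilde w_{AA})+\sigma\eta S(\widetilde w_{S\Sigma}+\gamma\widetilde w_{A\Sigma})+\frac12(\eta^2+\xi)\widetilde w_{\Sigma\Sigma}$. Delta-vega hedge $\boldsymbol\upsilon^\star_t=(\Delta-\frac{\mathcal V_\Sigma}{\mathcal C_\Sigma}\mathcal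 C_S,\frac{\mathcal V_\Sigma}{\mathcal C_\Sigma})(t,\mathbf X_t)$. Standing hypotheses (H): Assumption (A) holds, $\boldsymbol\upsilon^\star\in\mathfrak Y$, and $(P^\psi)_{\psi\in(0,\psi_0)}\subset\mathfrak P$ is a candidate asymptotic model family. *)

theory Defs
  imports "HOL-Probability.Probability"
begin

(* A point x = (S, A, M, Sig) of the state space; time t is a separate argument. *)
type_synonym state = "real \<times> real \<times> real \<times> real"
type_synonym sfun = "real \<Rightarrow> state \<Rightarrow> real"
type_synonym coef = "real \<Rightarrow> real \<times> real \<times> real \<Rightarrow> real"
(* paths omega = (omega^S, omega^Sigma, omega^A) *)
type_synonym path = "real \<Rightarrow> real \<times> real \<times> real"

definition stS :: "state \<Rightarrow> real" where "stS x = fst x"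
definition stA :: "state \<Rightarrow> real" where "stA x = fst (snd x)"
definition stM :: "state \<Rightarrow> real" where "stM x = fst (snd (snd x))"
definition stSig :: "state \<Rightarrow> real" where "stSig x = snd (snd (snd x))"

definition pd_t :: "sfun \<Rightarrow> sfun" where
  "pd_t f = (\<lambda>t x. deriv (\<lambda>\<tau>. f \<tau> x) t)"
definition pd_S :: "sfun \<Rightarrow> sfun" where
  "pd_S f = (\<lambda>t x. deriv (\<lambda>s. f t (s, stA x, stM x, stSig x)) (stS x))"
definition pd_A :: "sfun \<Rightarrow> sfun" where
  "pd_A f = (\<lambda>t x. deriv (\<lambda>a. f t (stS x, a, stM x, stSig x)) (stA x))"
definition pd_M :: "sfun \<Rightarrow> sfun" where
  "pd_M f = (\<lambda>t x. deriv (\<lambda>m. f t (stS x, stA x, m, stSig x)) (stM x))"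
definition pd_Sig :: "sfun \<Rightarrow> sfun" where
  "pd_Sig f = (\<lambda>t x. deriv (\<lambda>g. f t (stS x, stA x, stM x, g)) (stSig x))"

definition ev :: "coef \<Rightarrow> real \<Rightarrow> state \<Rightarrow> real" where
  "ev \<alpha> t x = \<alpha> t (stS x, stA x, stM x)"

definition GammaOp :: "coef \<Rightarrow> sfun \<Rightarrow> sfun" where
  "GammaOp \<gamma> f = (\<lambda>t x. pd_S (pd_S f) t x + 2 * ev \<gamma> t x * pd_A (pd_S f) t x
                          + (ev \<gamma> t x)^2 * pd_A (pd_A f) t x)"
definition DeltaSig :: "coef \<Rightarrow> sfun \<Rightarrow> sfun" where
  "DeltaSig \<gamma> f = (\<lambda>t x. pd_Sig (pd_S f) t x + ev \<gamma> t x * pd_Sig (pd_A f) t x)"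

definition genL :: "coef \<Rightarrow> coef \<Rightarrow> coef \<Rightarrow> sfun \<Rightarrow> sfun" where
  "genL \<alpha> \<beta> \<gamma> f = (\<lambda>t x. pd_t f t x + (ev \<alpha> t x + 1/2 * ev \<beta> t x * (stSig x)^2) * pd_A f t x
                  + 1/2 * (stSig x)^2 * (stS x)^2 * GammaOp \<gamma> f t x)"

definition liftC :: "(real \<Rightarrow> real \<Rightarrow> real \<Rightarrow> real) \<Rightarrow> sfun" where
  "liftC C = (\<lambda>t x. C t (stS x) (stSig x))"

fun wdot :: "state \<Rightarrow> state \<Rightarrow> state \<Rightarrow> real" where
  "wdot (a,b,c,d) (u1,u2,u3,u4) (w1,w2,w3,w4) = a*u1*w1 + b*u2*w2 + c*u3*w3 + d*u4*w4"
definition dot4 :: "state \<Rightarrow> state \<Rightarrow> real" where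
  "dot4 u w = wdot (1,1,1,1) u w"
fun diagmul :: "state \<Rightarrow> state \<Rightarrow> state" where
  "diagmul (a,b,c,d) (u1,u2,u3,u4) = (a*u1, b*u2, c*u3, d*u4)"
definition e4 :: state where "e4 = (0,0,0,1)"
definition negpart :: "real \<Rightarrow> real" where "negpart r = max (- r) 0"

definition cvec :: "(real \<Rightarrow> real \<Rightarrow> real \<Rightarrow> real) \<Rightarrow> real \<Rightarrow> state \<Rightarrow> state" where
  "cvec C t x = (pd_Sig (liftC C) t x,
                 stSig x * (stS x)^2 * pd_S (pd_S (liftC C)) t x,
                 stSig x * stS x * pd_Sig (pd_S (liftC C)) t x,
                 1/2 * pd_Sig (pd_Sig (liftC C)) t x)"

definition vvec :: "coef \<Rightarrow> coef \<Rightarrow> sfun \<Rightarrow> real \<Rightarrow> state \<Rightarrow> state" where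
  "vvec \<beta> \<gamma> V t x = (pd_Sig V t x,
                 stSig x * (ev \<beta> t x * pd_A V t x + (stS x)^2 * GammaOp \<gamma> V t x),
                 stSig x * stS x * DeltaSig \<gamma> V t x,
                 1/2 * pd_Sig (pd_Sig V) t x)"

(* Psi = (psi_nu, psi_sigma, psi_eta, psi_xi) is the diagonal of the preference matrix *)
definition lam :: "state \<Rightarrow> (real \<Rightarrow> real \<Rightarrow> real \<Rightarrow> real) \<Rightarrow> coef \<Rightarrow> coef \<Rightarrow> sfun \<Rightarrow> real \<Rightarrow> state \<Rightarrow> real" where
  "lam Psi C \<beta> \<gamma> V t x =
     (let c = cvec C t x; v = vvec \<beta> \<gamma> V t x;
          CSS = pd_Sig (pd_Sig (liftC C)) t x; VSS = pd_Sig (pd_Sig V) t x;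
          pxi = snd (snd (snd Psi)); r = wdot Psi c v / wdot Psi c c
      in if VSS - r * CSS \<ge> 0 then r
         else (wdot Psi c v - 1/4 * CSS * VSS * pxi) / (wdot Psi c c - 1/4 * CSS^2 * pxi))"

definition muf :: "state \<Rightarrow> (real \<Rightarrow> real \<Rightarrow> real \<Rightarrow> real) \<Rightarrow> coef \<Rightarrow> coef \<Rightarrow> sfun \<Rightarrow> real \<Rightarrow> state \<Rightarrow> real" where
  "muf Psi C \<beta> \<gamma> V t x = 1/2 * negpart (pd_Sig (pd_Sig V) t x
                       - lam Psi C \<beta> \<gamma> V t x * pd_Sig (pd_Sig (liftC C)) t x)"

definition zetatilde :: "state \<Rightarrow> (real \<Rightarrow> real \<Rightarrow> real \<Rightarrow> real) \<Rightarrow> coef \<Rightarrow> coef \<Rightarrow> sfun \<Rightarrow> real \<Rightarrow> state \<Rightarrow> state" where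
  "zetatilde Psi C \<beta> \<gamma> V t x = diagmul Psi (vvec \<beta> \<gamma> V t x - lam Psi C \<beta> \<gamma> V t x *\<^sub>R cvec C t x
                                           + muf Psi C \<beta> \<gamma> V t x *\<^sub>R e4)"

definition gtilde :: "state \<Rightarrow> (real \<Rightarrow> real \<Rightarrow> real \<Rightarrow> real) \<Rightarrow> coef \<Rightarrow> coef \<Rightarrow> sfun \<Rightarrow> real \<Rightarrow> state \<Rightarrow> real" where
  "gtilde Psi C \<beta> \<gamma> V t x = dot4 (vvec \<beta> \<gamma> V t x) (zetatilde Psi C \<beta> \<gamma> V t x)"

definition zeta0 :: "real \<Rightarrow> state" where "zeta0 Sg = (0, Sg, 0, 0)"

definition bV :: "coef \<Rightarrow> coef \<Rightarrow> sfun \<Rightarrow> real \<Rightarrow> state \<Rightarrow> state \<Rightarrow> real" where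
  "bV \<beta> \<gamma> V t x \<zeta> = (case \<zeta> of (nu, sg, eta, xi) \<Rightarrow>
      nu * pd_Sig V t x
    + 1/2 * (ev \<beta> t x * pd_A V t x + (stS x)^2 * GammaOp \<gamma> V t x) * (sg^2 - (stSig x)^2)
    + sg * eta * stS x * DeltaSig \<gamma> V t x
    + 1/2 * (eta^2 + xi) * pd_Sig (pd_Sig V) t x)"

definition H2 :: "coef \<Rightarrow> coef \<Rightarrow> sfun \<Rightarrow> (real \<Rightarrow> real) \<Rightarrow> sfun \<Rightarrow> real \<Rightarrow> real \<Rightarrow> state \<Rightarrow> real \<Rightarrow> state \<Rightarrow> real" where
  "H2 \<beta> \<gamma> V U w \<psi> t x y \<zeta> = (case \<zeta> of (nu, sg, eta, xi) \<Rightarrow>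
      - 1/2 * ((sg - stSig x)^2 * (ev \<beta> t x * pd_A V t x + (stS x)^2 * GammaOp \<gamma> V t x)
               + 2 * (sg - stSig x) * eta * (stS x * DeltaSig \<gamma> V t x)
               + eta^2 * pd_Sig (pd_Sig V) t x)
    + deriv (deriv U) y / deriv U y * bV \<beta> \<gamma> V t x \<zeta> * w t x * \<psi>)"

definition H3 :: "coef \<Rightarrow> coef \<Rightarrow> coef \<Rightarrow> sfun \<Rightarrow> real \<Rightarrow> state \<Rightarrow> state \<Rightarrow> real" where
  "H3 \<alpha> \<beta> \<gamma> w t x \<zeta> = (case \<zeta> of (nu, sg, eta, xi) \<Rightarrow>
      nu * pd_Sig w t x
    + (ev \<alpha> t x + 1/2 * ev \<beta> t x * sg^2) * pd_A w t x
    + 1/2 * sg^2 * (stS x)^2 * GammaOp \<gamma> w t x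
    + sg * eta * stS x * DeltaSig \<gamma> w t x
    + 1/2 * (eta^2 + xi) * pd_Sig (pd_Sig w) t x)"

(* domains: R_+ read as (0,infinity) *)
definition D0 :: "real \<Rightarrow> (real \<times> state) set" where
  "D0 T = {(t, x). 0 < t \<and> t < T \<and> 0 < stS x \<and> 0 < stM x \<and> 0 < stSig x}"
definition Dom :: "real \<Rightarrow> real \<Rightarrow> real \<Rightarrow> (real \<times> state) set" where
  "Dom T lo hi = {(t, x). (t, x) \<in> D0 T \<and> lo \<le> stSig x \<and> stSig x \<le> hi}"
definition Zbox :: "real \<Rightarrow> real \<Rightarrow> real \<Rightarrow> real \<Rightarrow> real \<Rightarrow> real \<Rightarrow> real \<Rightarrow> state set" where
  "Zbox nl nh sl sh el eh xh = {(nu, sg, eta, xi). nl \<le> nu \<and> nu \<le> nh \<and> sl \<le> sg \<and> sg \<le> sh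
                                 \<and> el \<le> eta \<and> eta \<le> eh \<and> 0 \<le> xi \<and> xi \<le> xh}"

(* path space: continuous paths on [0,T] started at (S0,Sig0,A0), with the sigma-algebra
   generated by the coordinates (= Borel sigma-algebra of the uniform topology) *)
definition PathSpace :: "real \<Rightarrow> real \<Rightarrow> real \<Rightarrow> real \<Rightarrow> path measure" where
  "PathSpace T S0 Sg0 A0 =
     restrict_space (PiM {0..T} (\<lambda>_. borel))
       {\<omega> \<in> space (PiM {0..T} (\<lambda>_. (borel :: (real \<times> real \<times> real) measure))).
           continuous_on {0..T} \<omega> \<and> \<omega> 0 = (S0, Sg0, A0)}"

definition Xproc :: "path \<Rightarrow> real \<Rightarrow> state" where
  "Xproc \<omega> t = (fst (\<omega> t), snd (snd (\<omega> t)), Sup ((\<lambda>u. fst (\<omega> u)) ` {0..t}), fst (snd (\<omega> t)))"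

definition Lp :: "real \<Rightarrow> real \<Rightarrow> path measure set \<Rightarrow> sfun set" where
  "Lp p T Ps = {K. (\<lambda>(t, x). K t x) \<in> borel_measurable (restrict_space borel (D0 T)) \<and>
       (SUP P\<in>Ps. \<integral>\<^sup>+ \<omega>. (\<integral>\<^sup>+ t\<in>{0<..<T}. ennreal (\<bar>K t (Xproc \<omega> t)\<bar> powr p) \<partial>lborel) \<partial>P) < \<infinity>}"

definition call_ok :: "real \<Rightarrow> real \<Rightarrow> real \<Rightarrow> real \<Rightarrow> (real \<Rightarrow> real) \<Rightarrow> (real \<Rightarrow> real \<Rightarrow> real \<Rightarrow> real) \<Rightarrow> bool" where
  "call_ok T TC lo hi Cpay C \<longleftrightarrow> T \<le> TC \<and>
     (\<forall>t S Sg. 0 < t \<and> t < TC \<and> 0 < S \<and> lo \<le> Sg \<and> Sg \<le> hi \<longrightarrow>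
         deriv (\<lambda>\<tau>. C \<tau> S Sg) t + 1/2 * Sg^2 * S^2 * deriv (\<lambda>s. deriv (\<lambda>s'. C t s' Sg) s) S = 0) \<and>
     (\<forall>S Sg. 0 \<le> S \<and> lo \<le> Sg \<and> Sg \<le> hi \<longrightarrow> C TC S Sg = Cpay S)"

definition V_pde :: "coef \<Rightarrow> coef \<Rightarrow> coef \<Rightarrow> coef \<Rightarrow> real \<Rightarrow> real \<Rightarrow> real \<Rightarrow> (real \<times> real \<times> real \<Rightarrow> real) \<Rightarrow> sfun \<Rightarrow> bool" where
  "V_pde \<alpha> \<beta> \<gamma> \<delta> T lo hi Vpay V \<longleftrightarrow>
     (\<forall>(t, x) \<in> Dom T lo hi. genL \<alpha> \<beta> \<gamma> V t x = 0 \<and>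
          (stS x \<ge> stM x \<longrightarrow> ev \<delta> t x * pd_A V t x + pd_M V t x = 0)) \<and>
     (\<forall>x. 0 < stS x \<and> 0 < stM x \<and> lo \<le> stSig x \<and> stSig x \<le> hi \<longrightarrow> V T x = Vpay (stS x, stA x, stM x))"

definition w_pde :: "state \<Rightarrow> (real \<Rightarrow> real \<Rightarrow> real \<Rightarrow> real) \<Rightarrow> coef \<Rightarrow> coef \<Rightarrow> coef \<Rightarrow> coef \<Rightarrow> real \<Rightarrow> real \<Rightarrow> real \<Rightarrow> sfun \<Rightarrow> sfun \<Rightarrow> bool" where
  "w_pde Psi C \<alpha> \<beta> \<gamma> \<delta> T lo hi V w \<longleftrightarrow>
     (\<forall>(t, x) \<in> Dom T lo hi. genL \<alpha> \<beta> \<gamma> w t x + 1/2 * gtilde Psi C \<beta> \<gamma> V t x = 0 \<and>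
          (stS x \<ge> stM x \<longrightarrow> ev \<delta> t x * pd_A w t x + pd_M w t x = 0)) \<and>
     (\<forall>x. 0 < stS x \<and> 0 < stM x \<and> lo \<le> stSig x \<and> stSig x \<le> hi \<longrightarrow> w T x = 0)"

definition utility_ok :: "(real \<Rightarrow> real) \<Rightarrow> bool" where
  "utility_ok U \<longleftrightarrow>
     (\<forall>y. U differentiable at y) \<and> (\<forall>y. deriv U differentiable at y) \<and>
     (\<forall>y. deriv (deriv U) differentiable at y) \<and> continuous_on UNIV (deriv (deriv (deriv U))) \<and>
     (\<forall>y. deriv U y > 0) \<and> (\<forall>y. deriv (deriv U) y < 0) \<and>
     antimono (\<lambda>y. - deriv (deriv U) y / deriv U y)"

end

theory Submission imports Defs begin

lemma PS_space:
  assumes "sets N = sets (PathSpace T S0 Sg0 A0)" "\<omega> \<in> space N"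
  shows "continuous_on {0..T} \<omega> \<and> \<omega> 0 = (S0, Sg0, A0)"
proof -
  have "space N = space (PathSpace T S0 Sg0 A0)" using assms(1) by (rule sets_eq_imp_space_eq)
  then show ?thesis using assms(2) unfolding PathSpace_def by (auto simp: space_restrict_space)
qed

lemma PS_coord:
  assumes "sets N = sets (PathSpace T S0 Sg0 A0)" "q \<in> {0..T}"
  shows "(\<lambda>\<omega>. \<omega> q) \<in> borel_measurable N"
proof -
  have "(\<lambda>\<omega>. \<omega> q) \<in> borel_measurable (PathSpace T S0 Sg0 A0)"
    unfolding PathSpace_def
    by (rule measurable_restrict_space1) (rule measurable_component_singleton[OF assms(2)])
  then show ?thesis using measurable_cong_sets[OF assms(1) refl] by blast
qed
lemma ceil_approx:
  fixes s :: real assumes "0 \<le> s" "s \<le> T"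
  shows "(\<lambda>n. max 0 (min T (real_of_int (ceiling (real (Suc n) * s)) / real (Suc n)))) \<longlonglongrightarrow> s"
proof -
  have b: "\<bar>max 0 (min T (real_of_int (ceiling (real (Suc n) * s)) / real (Suc n))) - s\<bar> \<le> 1 / real (Suc n)" for n
  proof -
    have "real (Suc n) * s \<le> of_int (ceiling (real (Suc n) * s))" by (rule le_of_int_ceiling)
    moreover have "of_int (ceiling (real (Suc n) * s)) \<le> real (Suc n) * s + 1" by (rule of_int_ceiling_le_add_one)
    moreover have m: "0 < real (Suc n)" by simp
    ultimately have "s \<le> of_int (ceiling (real (Suc n) * s)) / real (Suc n)"
      by (simp add: pos_le_divide_eq mult.commute)
    moreover have "of_int (ceiling (real (Suc n) * s)) / real (Suc n) \<le> s + 1 / real (Suc n)"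
    proof -
      have "of_int (ceiling (real (Suc n) * s)) / real (Suc n) \<le> (real (Suc n) * s + 1) / real (Suc n)"
        using \<open>of_int (ceiling (real (Suc n) * s)) \<le> real (Suc n) * s + 1\<close> m by (rule divide_right_mono[OF _ less_imp_le])
      also have "\<dots> = s + 1 / real (Suc n)" using m by (simp add: add_divide_distrib)
      finally show ?thesis .
    qed
    ultimately have "s \<le> of_int (ceiling (real (Suc n) * s)) / real (Suc n)"
       "of_int (ceiling (real (Suc n) * s)) / real (Suc n) \<le> s + 1 / real (Suc n)" by blast+
    then show ?thesis using assms by (auto simp: abs_if max_def min_def)
  qed
  have "(\<lambda>n. 1 / real (Suc n)) \<longlonglongrightarrow> 0" by (rule LIMSEQ_Suc[OF lim_inverse_n'[unfolded inverse_eq_divide]])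
  then have "(\<lambda>n. max 0 (min T (real_of_int (ceiling (real (Suc n) * s)) / real (Suc n))) - s) \<longlonglongrightarrow> 0"
    by (rule Lim_null_comparison[rotated]) (use b in \<open>simp add: always_eventually\<close>)
  then show ?thesis by (simp add: LIM_zero_iff)
qed

lemma PS_joint:
  assumes N: "sets N = sets (PathSpace T S0 Sg0 A0)" and I: "I \<subseteq> {0..T}" "0 \<le> T"
  shows "(\<lambda>z. fst z (snd z)) \<in> borel_measurable (restrict_space (N \<Otimes>\<^sub>M lborel) (space N \<times> I))"
proof -
  define c where "c n s = max 0 (min T (real_of_int (ceiling (real (Suc n) * s)) / real (Suc n)))" for n s
  let ?R = "restrict_space (N \<Otimes>\<^sub>M lborel) (space N \<times> I)"
  have meas: "(\<lambda>z. fst z (c n (snd z))) \<in> borel_measurable ?R" for n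
  proof -
    have g: "(\<lambda>z. ceiling (real (Suc n) * snd z)) \<in> measurable ?R (count_space UNIV)"
      by (rule measurable_compose[OF _ measurable_real_ceiling]) (rule measurable_restrict_space1, measurable)
    have f: "(\<lambda>z. fst z (max 0 (min T (real_of_int k / real (Suc n))))) \<in> borel_measurable ?R" for k
    proof -
      define q where "q = max 0 (min T (real_of_int k / real (Suc n)))"
      have q: "q \<in> {0..T}" using I by (auto simp: q_def)
      have "(\<lambda>z. (\<lambda>\<omega>. \<omega> q) (fst z)) \<in> borel_measurable (N \<Otimes>\<^sub>M lborel)"
        by (rule measurable_compose[OF measurable_fst PS_coord[OF N q]])
      then show ?thesis unfolding q_def[symmetric] by (rule measurable_restrict_space1)
    qed
    show ?thesis
      unfolding c_def by (rule measurable_compose_countable[OF f g])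
  qed
  show ?thesis
  proof (rule borel_measurable_LIMSEQ_metric[OF meas])
    fix z assume z: "z \<in> space ?R"
    then have w: "fst z \<in> space N" and s: "snd z \<in> I" by (auto simp: space_restrict_space space_pair_measure)
    have cont: "continuous_on {0..T} (fst z)" using PS_space[OF N w] by simp
    have s2: "0 \<le> snd z" "snd z \<le> T" using s I by auto
    have lim: "(\<lambda>n. c n (snd z)) \<longlonglongrightarrow> snd z" unfolding c_def by (rule ceil_approx[OF s2])
    have ev: "\<forall>\<^sub>F n in sequentially. c n (snd z) \<in> {0..T}" using I(2) by (auto simp: c_def)
    show "(\<lambda>n. fst z (c n (snd z))) \<longlonglongrightarrow> fst z (snd z)"
      using continuous_on_tendsto_compose[OF cont lim _ ev] s2 by (simp add: o_def)
  qed
qed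

lemma sup_rat:
  fixes f :: "real \<Rightarrow> real"
  assumes cont: "continuous_on {0..T} f" and t: "0 < t" "t < T"
  shows "Sup (f ` {0..t}) = max (f t) (SUP q\<in>\<rat> \<inter> {0..T}. (if q \<le> t then f q else f 0))"
proof -
  let ?Q = "\<rat> \<inter> {0..T}"
  let ?F = "\<lambda>q. if q \<le> t then f q else f 0"
  have cont': "continuous_on {0..t} f" using t by (intro continuous_on_subset[OF cont]) auto
  have cpt: "compact (f ` {0..t})" by (rule compact_continuous_image[OF cont' compact_Icc])
  have bdd: "bdd_above (f ` {0..t})" using cpt by (simp add: bounded_imp_bdd_above compact_imp_bounded)
  have ne: "f ` {0..t} \<noteq> {}" using t by auto
  have Fin: "?F q \<in> f ` {0..t}" if "q \<in> ?Q" for q using that t by auto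
  have sub: "?F ` ?Q \<subseteq> f ` {0..t}" using Fin by blast
  have bddF: "bdd_above (?F ` ?Q)" by (rule bdd_above_mono[OF bdd sub])
  have Qne: "?Q \<noteq> {}" using t by (auto intro!: exI[of _ 0])
  obtain m where m: "m \<in> f ` {0..t}" "\<forall>y\<in>f ` {0..t}. y \<le> m"
    using compact_attains_sup[OF cpt ne] by blast
  then obtain u where u0: "u \<in> {0..t}" "m = f u" by blast
  have u: "u \<in> {0..t}" "Sup (f ` {0..t}) = f u"
    using u0 m cSup_eq_maximum[of m "f ` {0..t}"] by auto
  have le: "max (f t) (SUP q\<in>?Q. ?F q) \<le> Sup (f ` {0..t})"
  proof -
    have "f t \<le> Sup (f ` {0..t})" using bdd t by (intro cSup_upper) auto
    moreover have "(SUP q\<in>?Q. ?F q) \<le> Sup (f ` {0..t})"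
      using Qne cSup_upper[OF Fin bdd] by (intro cSUP_least) auto
    ultimately show ?thesis by simp
  qed
  have ge: "f u \<le> max (f t) (SUP q\<in>?Q. ?F q)"
  proof (cases "u = t")
    case True then show ?thesis by simp
  next
    case False
    then have ut: "u < t" using u by auto
    have "f u \<le> (SUP q\<in>?Q. ?F q) + e" if e: "e > 0" for e
    proof -
      have "continuous (at u within {0..T}) f" using cont u t by (simp add: continuous_on_eq_continuous_within)
      then obtain d where d: "d > 0" "\<And>x. x \<in> {0..T} \<Longrightarrow> dist x u < d \<Longrightarrow> dist (f x) (f u) < e"
        using e unfolding continuous_within_eps_delta by blast
      obtain r where r: "r \<in> \<rat>" "u < r" "r < min (u + d) t" using Rats_dense_in_real[of u "min (u+d) t"] ut d by auto
      have rQ: "r \<in> ?Q" using r u t by auto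
      have "dist (f r) (f u) < e" using d(2)[of r] r u t by (auto simp: dist_real_def)
      then have "f u \<le> f r + e" by (auto simp: dist_real_def)
      moreover have "f r = ?F r" using r by simp
      moreover have "?F r \<le> (SUP q\<in>?Q. ?F q)" using bddF rQ by (rule cSUP_upper2) simp
      ultimately show ?thesis by linarith
    qed
    then have "f u \<le> (SUP q\<in>?Q. ?F q)" by (rule field_le_epsilon)
    then show ?thesis by simp
  qed
  show ?thesis using le ge u by linarith
qed

lemma bm_fst: "f \<in> borel_measurable M \<Longrightarrow> (\<lambda>x. fst (f x)) \<in> borel_measurable M"
  by (rule borel_measurable_continuous_on[OF continuous_on_fst[OF continuous_on_id]])
lemma bm_snd: "f \<in> borel_measurable M \<Longrightarrow> (\<lambda>x. snd (f x)) \<in> borel_measurable M"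
  by (rule borel_measurable_continuous_on[OF continuous_on_snd[OF continuous_on_id]])

lemma PS_X:
  assumes N: "sets N = sets (PathSpace T S0 Sg0 A0)" and T: "0 < T"
  shows "(\<lambda>z. (snd z, Xproc (fst z) (snd z))) \<in> borel_measurable (restrict_space (N \<Otimes>\<^sub>M lborel) (space N \<times> {0<..<T}))"
proof -
  let ?R = "restrict_space (N \<Otimes>\<^sub>M lborel) (space N \<times> {0<..<T})"
  have E[measurable]: "(\<lambda>z. fst z (snd z)) \<in> borel_measurable ?R"
    by (rule PS_joint[OF N]) (use T in auto)
  have sn[measurable]: "snd \<in> borel_measurable ?R"
    by (rule measurable_restrict_space1) simp
  let ?Q = "\<rat> \<inter> {0..T}"
  have Fm: "(\<lambda>z. if q \<le> snd z then fst (fst z q) else fst (fst z 0)) \<in> borel_measurable ?R" if q: "q \<in> ?Q" for q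
  proof -
    have a: "(\<lambda>z. fst z q) \<in> borel_measurable ?R" 
      using q by (intro measurable_restrict_space1 measurable_compose[OF measurable_fst PS_coord[OF N]]) auto
    have b: "(\<lambda>z. fst z 0) \<in> borel_measurable ?R"
      using T by (intro measurable_restrict_space1 measurable_compose[OF measurable_fst PS_coord[OF N]]) auto
    have p: "{z \<in> space ?R. q \<le> snd z} \<in> sets ?R" by measurable
    show ?thesis by (rule measurable_If[OF bm_fst[OF a] bm_fst[OF b] p])
  qed
  have bddq: "bdd_above ((\<lambda>q. if q \<le> snd z then fst (fst z q) else fst (fst z 0)) ` ?Q)" if z: "z \<in> space ?R" for z
  proof -
    have w: "fst z \<in> space N" using z by (auto simp: space_restrict_space space_pair_measure)
    have c: "continuous_on {0..T} (\<lambda>u. fst (fst z u))" using PS_space[OF N w] by (intro continuous_on_fst) auto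
    have "compact ((\<lambda>u. fst (fst z u)) ` {0..T})" by (rule compact_continuous_image[OF c compact_Icc])
    then have bd: "bdd_above ((\<lambda>u. fst (fst z u)) ` {0..T})" by (simp add: bounded_imp_bdd_above compact_imp_bounded)
    have "(\<lambda>q. if q \<le> snd z then fst (fst z q) else fst (fst z 0)) ` ?Q \<subseteq> (\<lambda>u. fst (fst z u)) ` {0..T}"
      using T by auto
    then show ?thesis by (rule bdd_above_mono[OF bd])
  qed
  have Sm: "(\<lambda>z. SUP q\<in>?Q. (if q \<le> snd z then fst (fst z q) else fst (fst z 0))) \<in> borel_measurable ?R"
    by (rule borel_measurable_cSUP[OF _ Fm bddq]) (rule countable_subset[OF _ countable_rat], auto)
  have Mm: "(\<lambda>z. Sup ((\<lambda>u. fst (fst z u)) ` {0..snd z})) \<in> borel_measurable ?R"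
  proof (rule measurable_cong[THEN iffD2])
    fix z assume z: "z \<in> space ?R"
    then have w: "fst z \<in> space N" and s: "snd z \<in> {0<..<T}" by (auto simp: space_restrict_space space_pair_measure)
    have c: "continuous_on {0..T} (\<lambda>u. fst (fst z u))" using PS_space[OF N w] by (intro continuous_on_fst) auto
    show "Sup ((\<lambda>u. fst (fst z u)) ` {0..snd z}) = max (fst (fst z (snd z))) (SUP q\<in>?Q. (if q \<le> snd z then fst (fst z q) else fst (fst z 0)))"
      using sup_rat[OF c, of "snd z"] s by auto
  next
    show "(\<lambda>z. max (fst (fst z (snd z))) (SUP q\<in>?Q. (if q \<le> snd z then fst (fst z q) else fst (fst z 0)))) \<in> borel_measurable ?R"
      by (rule borel_measurable_max[OF Sm bm_fst[OF E]])
  qed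
  show ?thesis unfolding Xproc_def
    by (intro borel_measurable_Pair sn bm_fst bm_snd E Mm)

qed

lemma D0_borel: "D0 T \<in> sets borel"
proof -
  have "D0 T = {p. 0 < fst p} \<inter> {p. fst p < T} \<inter> {p. 0 < fst (snd p)} \<inter> {p. 0 < fst (snd (snd (snd p)))}
      \<inter> {p. 0 < snd (snd (snd (snd p)))}"
    by (auto simp: D0_def stS_def stM_def stSig_def)
  also have "open \<dots>"
    by (intro open_Int open_Collect_less continuous_intros)
  finally show ?thesis by simp
qed

lemma comp_D0:
  assumes N: "sets N = sets (PathSpace T S0 Sg0 A0)" and T: "0 < T"
    and f: "(\<lambda>(t, x). f t x) \<in> borel_measurable (restrict_space borel (D0 T))"
  shows "(\<lambda>z. if (snd z, Xproc (fst z) (snd z)) \<in> D0 T then f (snd z) (Xproc (fst z) (snd z)) else 0)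
           \<in> borel_measurable (restrict_space (N \<Otimes>\<^sub>M lborel) (space N \<times> {0<..<T}))"
proof -
  let ?R = "restrict_space (N \<Otimes>\<^sub>M lborel) (space N \<times> {0<..<T})"
  let ?P = "\<lambda>z. (snd z, Xproc (fst z) (snd z))"
  have Ph: "?P \<in> borel_measurable ?R" by (rule PS_X[OF N T])
  have S: "{z \<in> space ?R. ?P z \<in> D0 T} \<in> sets ?R"
    using measurable_sets[OF Ph D0_borel] by (simp add: vimage_def Int_def conj_commute)
  have "?P \<in> measurable (restrict_space ?R {z. ?P z \<in> D0 T}) (restrict_space borel (D0 T))"
    by (rule measurable_restrict_space3[OF Ph]) auto
  then have "(\<lambda>z. (\<lambda>(t, x). f t x) (?P z)) \<in> borel_measurable (restrict_space ?R {z. ?P z \<in> D0 T})"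
    by (rule measurable_compose[OF _ f])
  then show ?thesis
    by (subst measurable_If_restrict_space_iff[OF S]) simp
qed

lemma to_pair:
  fixes g :: "path \<times> real \<Rightarrow> real"
  assumes g: "g \<in> borel_measurable (restrict_space (N \<Otimes>\<^sub>M lborel) (space N \<times> {0<..<T}))"
  shows "(\<lambda>z. ennreal (g z) * indicator {0<..<T} (snd z)) \<in> borel_measurable (N \<Otimes>\<^sub>M lborel)"
proof -
  have sp: "(space N \<times> {0<..<T}) \<inter> space (N \<Otimes>\<^sub>M lborel) \<in> sets (N \<Otimes>\<^sub>M lborel)"
    by (auto simp: space_pair_measure intro!: pair_measureI)
  have "(\<lambda>z. ennreal (g z)) \<in> borel_measurable (restrict_space (N \<Otimes>\<^sub>M lborel) (space N \<times> {0<..<T}))"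
    using g by measurable
  then have "(\<lambda>z. ennreal (g z) * indicator (space N \<times> {0<..<T}) z) \<in> borel_measurable (N \<Otimes>\<^sub>M lborel)"
    by (subst (asm) borel_measurable_restrict_space_iff_ennreal[OF sp])
  then show ?thesis
    by (rule measurable_cong[THEN iffD1, rotated]) (auto simp: space_pair_measure indicator_def)
qed

lemma abs_powr2: "\<bar>x::real\<bar> powr 2 = x^2"
  by (cases "x = 0") (simp_all add: powr_numeral)
lemma abs_powr4: "\<bar>x::real\<bar> powr 4 = x^4"
proof (cases "x = 0")
  case False
  then have "\<bar>x\<bar> powr 4 = \<bar>x\<bar>^4" by (simp add: powr_numeral)
  also have "\<bar>x\<bar>^4 = x^4" 
  proof -
    have "\<bar>x\<bar>^4 = (\<bar>x\<bar>^2)^2" by (simp flip: power_mult)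
    also have "\<dots> = (x^2)^2" by simp
    also have "\<dots> = x^4" by (simp flip: power_mult)
    finally show ?thesis .
  qed
  finally show ?thesis .
qed simp

lemma abs4: "\<bar>x::real\<bar>^4 = x^4"
proof -
  have "\<bar>x\<bar>^4 = (\<bar>x\<bar>^2)^2" by (simp flip: power_mult)
  also have "\<dots> = (x^2)^2" by simp
  also have "\<dots> = x^4" by (simp flip: power_mult)
  finally show ?thesis .
qed

lemma Lp2_from_bound:
  fixes fs :: "nat \<Rightarrow> sfun" and h :: sfun and n :: nat and C :: real
  assumes T: "0 < T"
    and Ps: "\<forall>P\<in>Ps. prob_space P \<and> sets P = sets (PathSpace T S0 Sg0 A0)"
    and fs: "\<And>j. j < n \<Longrightarrow> fs j \<in> Lp 4 T Ps"
    and hm: "(\<lambda>(t, x). h t x) \<in> borel_measurable (restrict_space borel (D0 T))"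
    and h0: "\<And>t x. (t, x) \<notin> D0 T \<Longrightarrow> h t x = 0"
    and hb: "\<And>t x. (t, x) \<in> D0 T \<Longrightarrow> (h t x)^2 \<le> C * (1 + (\<Sum>j<n. (fs j t x)^4))"
    and C: "0 \<le> C"
  shows "h \<in> Lp 2 T Ps"
proof -
  define B where "B j = (SUP P\<in>Ps. \<integral>\<^sup>+ \<omega>. (\<integral>\<^sup>+ t\<in>{0<..<T}. ennreal (\<bar>fs j t (Xproc \<omega> t)\<bar> powr 4) \<partial>lborel) \<partial>P)" for j
  have Bfin: "B j < \<infinity>" if "j < n" for j using fs[OF that] unfolding Lp_def B_def by simp
  define G where "G j z = ennreal (if (snd z, Xproc (fst z) (snd z)) \<in> D0 T then (fs j (snd z) (Xproc (fst z) (snd z)))^4 else 0)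
       * indicator {0<..<T} (snd z)" for j z
  define G1 where "G1 z = ennreal (if (snd z, Xproc (fst z) (snd z)) \<in> D0 T then 1 else 0) * indicator {0<..<T} (snd z)" for z
  have bound: "(\<integral>\<^sup>+ \<omega>. (\<integral>\<^sup>+ t\<in>{0<..<T}. ennreal (\<bar>h t (Xproc \<omega> t)\<bar> powr 2) \<partial>lborel) \<partial>P)
       \<le> ennreal C * (ennreal T + (\<Sum>j<n. B j))" if P: "P \<in> Ps" for P
  proof -
    have pP: "prob_space P" and N: "sets P = sets (PathSpace T S0 Sg0 A0)" using Ps P by auto
    have Gm: "G j \<in> borel_measurable (P \<Otimes>\<^sub>M lborel)" if "j < n" for j
    proof -
      have "(\<lambda>(t, x). (fs j t x)^4) \<in> borel_measurable (restrict_space borel (D0 T))"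
        using fs[OF that] unfolding Lp_def by (auto intro: borel_measurable_power[where n=4] simp: case_prod_beta')
      from to_pair[OF comp_D0[OF N T this]] show ?thesis unfolding G_def by simp
    qed
    have G1m: "G1 \<in> borel_measurable (P \<Otimes>\<^sub>M lborel)"
    proof -
      have "(\<lambda>(t, x). (\<lambda>t x. 1::real) t x) \<in> borel_measurable (restrict_space borel (D0 T))" by simp
      from to_pair[OF comp_D0[OF N T this]] show ?thesis unfolding G1_def by simp
    qed
    have Gt: "(\<lambda>t. G j (\<omega>, t)) \<in> borel_measurable lborel" if "j < n" "\<omega> \<in> space P" for j \<omega>
      by (rule measurable_compose_Pair1[OF that(2) Gm[OF that(1)]])
    have G1t: "(\<lambda>t. G1 (\<omega>, t)) \<in> borel_measurable lborel" if "\<omega> \<in> space P" for \<omega>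
      by (rule measurable_compose_Pair1[OF that G1m])
    have Gw: "(\<lambda>\<omega>. \<integral>\<^sup>+ t. G j (\<omega>, t) \<partial>lborel) \<in> borel_measurable P" if "j < n" for j
      using lborel.borel_measurable_nn_integral[of "\<lambda>\<omega> t. G j (\<omega>, t)" P] Gm[OF that] by simp
    have G1w: "(\<lambda>\<omega>. \<integral>\<^sup>+ t. G1 (\<omega>, t) \<partial>lborel) \<in> borel_measurable P"
      using lborel.borel_measurable_nn_integral[of "\<lambda>\<omega> t. G1 (\<omega>, t)" P] G1m by simp
    have pw: "ennreal (\<bar>h t (Xproc \<omega> t)\<bar> powr 2) * indicator {0<..<T} t
        \<le> ennreal C * (G1 (\<omega>, t) + (\<Sum>j<n. G j (\<omega>, t)))" for \<omega> t
    proof (cases "(t, Xproc \<omega> t) \<in> D0 T \<and> t \<in> {0<..<T}")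
      case True
      then have "\<bar>h t (Xproc \<omega> t)\<bar> powr 2 \<le> C * (1 + (\<Sum>j<n. (fs j t (Xproc \<omega> t))^4))"
        using hb by (simp add: abs_powr2)
      then have "ennreal (\<bar>h t (Xproc \<omega> t)\<bar> powr 2) \<le> ennreal (C * (1 + (\<Sum>j<n. (fs j t (Xproc \<omega> t))^4)))"
        by (rule ennreal_leI)
      also have "\<dots> = ennreal C * (1 + (\<Sum>j<n. ennreal ((fs j t (Xproc \<omega> t))^4)))"
        using C by (simp add: ennreal_mult sum_nonneg ennreal_plus)
      finally have "ennreal (\<bar>h t (Xproc \<omega> t)\<bar> powr 2) \<le> ennreal C * (1 + (\<Sum>j<n. ennreal ((fs j t (Xproc \<omega> t))^4)))" .
      then show ?thesis using True by (simp add: G_def G1_def)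
    next
      case False
      then have "ennreal (\<bar>h t (Xproc \<omega> t)\<bar> powr 2) * indicator {0<..<T} t = 0"
        using h0[of t "Xproc \<omega> t"] by (auto simp: indicator_def)
      then show ?thesis by (simp only:) (rule zero_le)
    qed
    have inner: "(\<integral>\<^sup>+ t\<in>{0<..<T}. ennreal (\<bar>h t (Xproc \<omega> t)\<bar> powr 2) \<partial>lborel)
        \<le> ennreal C * ((\<integral>\<^sup>+ t. G1 (\<omega>, t) \<partial>lborel) + (\<Sum>j<n. \<integral>\<^sup>+ t. G j (\<omega>, t) \<partial>lborel))"
      if w: "\<omega> \<in> space P" for \<omega>
    proof -
      have "(\<integral>\<^sup>+ t\<in>{0<..<T}. ennreal (\<bar>h t (Xproc \<omega> t)\<bar> powr 2) \<partial>lborel)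
          \<le> (\<integral>\<^sup>+ t. ennreal C * (G1 (\<omega>, t) + (\<Sum>j<n. G j (\<omega>, t))) \<partial>lborel)"
        by (rule nn_integral_mono) (rule pw)
      also have "\<dots> = ennreal C * ((\<integral>\<^sup>+ t. G1 (\<omega>, t) \<partial>lborel) + (\<Sum>j<n. \<integral>\<^sup>+ t. G j (\<omega>, t) \<partial>lborel))"
        using G1t[OF w] Gt[OF _ w] nn_integral_sum[of "{..<n}" "\<lambda>j t. G j (\<omega>, t)" lborel]
        by (simp add: nn_integral_cmult nn_integral_add borel_measurable_sum)
      finally show ?thesis .
    qed
    have "(\<integral>\<^sup>+ \<omega>. (\<integral>\<^sup>+ t\<in>{0<..<T}. ennreal (\<bar>h t (Xproc \<omega> t)\<bar> powr 2) \<partial>lborel) \<partial>P)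
        \<le> (\<integral>\<^sup>+ \<omega>. ennreal C * ((\<integral>\<^sup>+ t. G1 (\<omega>, t) \<partial>lborel) + (\<Sum>j<n. \<integral>\<^sup>+ t. G j (\<omega>, t) \<partial>lborel)) \<partial>P)"
      by (rule nn_integral_mono) (rule inner)
    also have "\<dots> = ennreal C * ((\<integral>\<^sup>+ \<omega>. \<integral>\<^sup>+ t. G1 (\<omega>, t) \<partial>lborel \<partial>P) + (\<Sum>j<n. \<integral>\<^sup>+ \<omega>. \<integral>\<^sup>+ t. G j (\<omega>, t) \<partial>lborel \<partial>P))"
      using G1w Gw nn_integral_sum[of "{..<n}" "\<lambda>j \<omega>. \<integral>\<^sup>+ t. G j (\<omega>, t) \<partial>lborel" P]
      by (simp add: nn_integral_cmult nn_integral_add borel_measurable_sum)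
    also have "\<dots> \<le> ennreal C * (ennreal T + (\<Sum>j<n. B j))"
    proof (intro mult_left_mono add_mono sum_mono)
      have "(\<integral>\<^sup>+ \<omega>. \<integral>\<^sup>+ t. G1 (\<omega>, t) \<partial>lborel \<partial>P) \<le> (\<integral>\<^sup>+ \<omega>. ennreal T \<partial>P)"
      proof (rule nn_integral_mono)
        fix \<omega>
        have "(\<integral>\<^sup>+ t. G1 (\<omega>, t) \<partial>lborel) \<le> (\<integral>\<^sup>+ t. indicator {0<..<T} t \<partial>lborel)"
          by (rule nn_integral_mono) (auto simp: G1_def indicator_def)
        also have "\<dots> = ennreal T" using T by simp
        finally show "(\<integral>\<^sup>+ t. G1 (\<omega>, t) \<partial>lborel) \<le> ennreal T" .
      qed
      also have "\<dots> = ennreal T" using prob_space.emeasure_space_1[OF pP] by simp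
      finally show "(\<integral>\<^sup>+ \<omega>. \<integral>\<^sup>+ t. G1 (\<omega>, t) \<partial>lborel \<partial>P) \<le> ennreal T" .
    next
      fix j assume j: "j \<in> {..<n}"
      have "(\<integral>\<^sup>+ \<omega>. \<integral>\<^sup>+ t. G j (\<omega>, t) \<partial>lborel \<partial>P)
          \<le> (\<integral>\<^sup>+ \<omega>. (\<integral>\<^sup>+ t\<in>{0<..<T}. ennreal (\<bar>fs j t (Xproc \<omega> t)\<bar> powr 4) \<partial>lborel) \<partial>P)"
        by (intro nn_integral_mono) (auto simp: G_def indicator_def abs_powr4)
      also have "\<dots> \<le> B j" unfolding B_def using P by (rule SUP_upper)
      finally show "(\<integral>\<^sup>+ \<omega>. \<integral>\<^sup>+ t. G j (\<omega>, t) \<partial>lborel \<partial>P) \<le> B j" .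
    qed simp
    finally show ?thesis .
  qed
  have "(SUP P\<in>Ps. \<integral>\<^sup>+ \<omega>. (\<integral>\<^sup>+ t\<in>{0<..<T}. ennreal (\<bar>h t (Xproc \<omega> t)\<bar> powr 2) \<partial>lborel) \<partial>P)
      \<le> ennreal C * (ennreal T + (\<Sum>j<n. B j))"
    by (rule SUP_least) (rule bound)
  also have "\<dots> < \<infinity>" using Bfin by (simp add: ennreal_mult_less_top sum_Pinfty less_top)
  finally have fin: "(SUP P\<in>Ps. \<integral>\<^sup>+ \<omega>. (\<integral>\<^sup>+ t\<in>{0<..<T}. ennreal (\<bar>h t (Xproc \<omega> t)\<bar> powr 2) \<partial>lborel) \<partial>P) < \<infinity>" .
  show ?thesis unfolding Lp_def using hm fin by auto
qed

lemma prod_le: "\<bar>a::real\<bar> \<le> A \<Longrightarrow> \<bar>b\<bar> \<le> B \<Longrightarrow> \<bar>a * b\<bar> \<le> A * B"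
  by (simp add: abs_mult mult_mono')

lemma H2_alg:
  fixes nu sg eta xi Sg B Dv Vs Vss R wv psi K k Kw sh E d Rest :: real
  assumes bds: "\<bar>B\<bar> \<le> k" "\<bar>Dv\<bar> \<le> k" "\<bar>Vs\<bar> \<le> k" "\<bar>Vss\<bar> \<le> k"
    and z: "\<bar>nu\<bar> \<le> d" "\<bar>sg - Sg\<bar> \<le> d" "\<bar>eta\<bar> \<le> d" "0 \<le> xi" "xi \<le> d"
    and s: "\<bar>sg\<bar> \<le> sh" "\<bar>sg + Sg\<bar> \<le> 2 * sh" "\<bar>eta\<bar> \<le> E"
    and R: "0 \<le> R" and w: "0 \<le> wv" "wv \<le> Kw" and dK: "d \<le> K * psi" and psi: "0 < psi"
    and K: "0 \<le> K" and Rest: "0 \<le> Rest"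
  shows "\<bar>- 1/2 * ((sg - Sg)^2 * B + 2 * (sg - Sg) * eta * Dv + eta^2 * Vss)
          + (- R) * (nu * Vs + 1/2 * B * (sg^2 - Sg^2) + sg * eta * Dv + 1/2 * (eta^2 + xi) * Vss) * wv * psi\<bar>
        \<le> (K * (2 * k * K + k * (1 + 2 * sh + (E + 1) / 2) * Kw + Rest)) * (1 + R) * psi^2"
proof -
  have d0: "0 \<le> d" using z by linarith
  have k0: "0 \<le> k" using bds by linarith
  have sh0: "0 \<le> sh" using s by linarith
  have E0: "0 \<le> E" using s by linarith
  have Kw0: "0 \<le> Kw" using w by linarith
  have sq: "(sg - Sg)^2 \<le> d^2" "eta^2 \<le> d^2"
    using power_mono[OF z(2) abs_ge_zero, of 2] power_mono[OF z(3) abs_ge_zero, of 2] by simp_all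
  have a1: "\<bar>(sg - Sg)^2 * B\<bar> \<le> d^2 * k" using sq bds by (intro prod_le) auto
  have a2': "\<bar>2 * (sg - Sg) * eta * Dv\<bar> \<le> 2 * d * d * k"
    using z bds by (intro prod_le) (auto simp: abs_mult intro!: mult_mono)
  have a2: "\<bar>2 * (sg - Sg) * eta * Dv\<bar> \<le> 2 * (d^2 * k)" using a2' by (simp add: power2_eq_square mult.assoc)
  have a3: "\<bar>eta^2 * Vss\<bar> \<le> d^2 * k" using sq bds by (intro prod_le) auto
  have first: "\<bar>- 1/2 * ((sg - Sg)^2 * B + 2 * (sg - Sg) * eta * Dv + eta^2 * Vss)\<bar> \<le> 2 * (d^2 * k)"
  proof -
    have tri: "\<bar>- 1/2 * (X + Y + Z)\<bar> \<le> 1/2 * (\<bar>X\<bar> + \<bar>Y\<bar> + \<bar>Z\<bar>)" for X Y Z :: real by (simp add: abs_mult)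
    have lin: "A \<le> 2 * m" if "A \<le> 1/2 * (a + b + c)" "a \<le> m" "b \<le> 2 * m" "c \<le> m" "0 \<le> m" for A a b c m::real using that by (simp add: field_simps)
    show ?thesis by (rule lin[OF tri[of "(sg - Sg)^2 * B" "2 * (sg - Sg) * eta * Dv" "eta^2 * Vss"] a1 a2 a3 mult_nonneg_nonneg[OF zero_le_power2 k0]])
  qed
  have e2: "eta^2 \<le> E * d"
  proof -
    have "eta^2 = \<bar>eta\<bar> * \<bar>eta\<bar>" by (simp add: power2_eq_square abs_mult[symmetric])
    also have "\<dots> \<le> E * d" using s z by (intro mult_mono) auto
    finally show ?thesis .
  qed
  have sgsq: "\<bar>sg^2 - Sg^2\<bar> \<le> 2 * sh * d"
  proof -
    have "sg^2 - Sg^2 = (sg + Sg) * (sg - Sg)" by (simp add: power2_eq_square algebra_simps)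
    then have "\<bar>sg^2 - Sg^2\<bar> \<le> (2 * sh) * d" using s z by (metis prod_le)
    then show ?thesis by simp
  qed
  have b1: "\<bar>nu * Vs\<bar> \<le> d * k" using z bds by (intro prod_le) auto
  have b2: "\<bar>1/2 * B * (sg^2 - Sg^2)\<bar> \<le> sh * d * k"
  proof -
    have "\<bar>B * (sg^2 - Sg^2)\<bar> \<le> k * (2 * sh * d)" using bds sgsq by (intro prod_le) auto
    then show ?thesis by (simp add: abs_mult algebra_simps)
  qed
  have b3: "\<bar>sg * eta * Dv\<bar> \<le> sh * d * k" using s z bds by (intro prod_le) (auto simp: abs_mult intro!: mult_mono)
  have b4: "\<bar>1/2 * (eta^2 + xi) * Vss\<bar> \<le> (E + 1) / 2 * d * k"
  proof -
    have h: "\<bar>(eta^2 + xi) * Vss\<bar> \<le> (E * d + d) * k" using e2 z bds by (intro prod_le) auto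
    have "\<bar>1/2 * (eta^2 + xi) * Vss\<bar> = 1/2 * \<bar>(eta^2 + xi) * Vss\<bar>" by (simp add: abs_mult)
    also have "\<dots> \<le> 1/2 * ((E * d + d) * k)" using h by simp
    also have "\<dots> = (E + 1) / 2 * d * k" by (simp add: algebra_simps)
    finally show ?thesis .
  qed
  define bv where "bv = nu * Vs + 1/2 * B * (sg^2 - Sg^2) + sg * eta * Dv + 1/2 * (eta^2 + xi) * Vss"
  have bvb: "\<bar>bv\<bar> \<le> k * (1 + 2 * sh + (E + 1) / 2) * d"
  proof -
    have tri: "\<bar>X + Y + Z + W\<bar> \<le> \<bar>X\<bar> + \<bar>Y\<bar> + \<bar>Z\<bar> + \<bar>W\<bar>" for X Y Z W :: real by arith
    have "d * k + sh * d * k + sh * d * k + (E + 1) / 2 * d * k = k * (1 + 2 * sh + (E + 1) / 2) * d"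
      by (simp add: algebra_simps)
    have lin: "A \<le> M" if "A \<le> a + b + c + e" "a \<le> m1" "b \<le> m2" "c \<le> m3" "e \<le> m4" "m1 + m2 + m3 + m4 = M" for A a b c e m1 m2 m3 m4 M::real using that by linarith
    show ?thesis unfolding bv_def by (rule lin[OF tri[of "nu * Vs" "1/2 * B * (sg^2 - Sg^2)" "sg * eta * Dv" "1/2 * (eta^2 + xi) * Vss"] b1 b2 b3 b4 \<open>d * k + sh * d * k + sh * d * k + (E + 1) / 2 * d * k = k * (1 + 2 * sh + (E + 1) / 2) * d\<close>])
  qed
  have "\<bar>(- R) * bv * wv * psi\<bar> = R * \<bar>bv\<bar> * wv * psi" using R w psi by (simp add: abs_mult)
  also have "\<dots> \<le> R * (k * (1 + 2 * sh + (E + 1) / 2) * d) * Kw * psi"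
    using R w psi bvb by (intro mult_mono mult_left_mono) (auto intro!: mult_nonneg_nonneg k0 sh0 E0 d0)
  also have "\<dots> \<le> R * (k * (1 + 2 * sh + (E + 1) / 2) * (K * psi)) * Kw * psi"
    using R Kw0 psi dK k0 sh0 E0 by (intro mult_right_mono mult_left_mono) auto
  finally have second: "\<bar>(- R) * bv * wv * psi\<bar> \<le> R * (K * (k * (1 + 2 * sh + (E + 1) / 2) * Kw)) * psi^2"
    by (simp add: power2_eq_square algebra_simps)
  have first': "\<bar>- 1/2 * ((sg - Sg)^2 * B + 2 * (sg - Sg) * eta * Dv + eta^2 * Vss)\<bar> \<le> (K * (2 * k * K)) * psi^2"
  proof -
    have "d^2 \<le> (K * psi)^2" by (rule power_mono[OF dK d0])
    then have "2 * (d^2 * k) \<le> 2 * ((K * psi)^2 * k)" using k0 by (intro mult_left_mono mult_right_mono) auto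
    then show ?thesis using first by (simp add: power2_eq_square algebra_simps)
  qed
  define K23 where "K23 = K * (2 * k * K + k * (1 + 2 * sh + (E + 1) / 2) * Kw + Rest)"
  have c1: "K * (2 * k * K) \<le> K23" unfolding K23_def using K k0 sh0 E0 Kw0 Rest
    by (intro mult_left_mono) auto
  have c2: "K * (k * (1 + 2 * sh + (E + 1) / 2) * Kw) \<le> K23" unfolding K23_def using K k0 sh0 E0 Kw0 Rest
    by (intro mult_left_mono) auto
  have p2: "0 \<le> psi^2" by simp
  have "\<bar>- 1/2 * ((sg - Sg)^2 * B + 2 * (sg - Sg) * eta * Dv + eta^2 * Vss) + (- R) * bv * wv * psi\<bar>
      \<le> K23 * psi^2 + R * K23 * psi^2"
  proof -
    have "(K * (2 * k * K)) * psi^2 \<le> K23 * psi^2" using c1 p2 by (rule mult_right_mono)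
    moreover have "R * (K * (k * (1 + 2 * sh + (E + 1) / 2) * Kw)) * psi^2 \<le> R * K23 * psi^2"
      using c2 p2 R by (intro mult_right_mono mult_left_mono) auto
    ultimately show ?thesis using first' second abs_triangle_ineq by (smt (verit))
  qed
  then show ?thesis unfolding K23_def[symmetric] bv_def by (simp add: algebra_simps)
qed

lemma H3_alg:
  fixes nu sg eta xi Sg W1 W3 W4 W5 K psi sh E d Pre :: real
  assumes z: "\<bar>nu\<bar> \<le> d" "\<bar>sg - Sg\<bar> \<le> d" "\<bar>eta\<bar> \<le> d" "0 \<le> xi" "xi \<le> d"
    and s: "\<bar>sg\<bar> \<le> sh" "\<bar>sg + Sg\<bar> \<le> 2 * sh" "\<bar>eta\<bar> \<le> E"
    and dK: "d \<le> K * psi" and psi: "0 < psi" and K: "0 \<le> K" and Pre: "0 \<le> Pre"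
  shows "\<bar>nu * W1 + 1/2 * (sg^2 - Sg^2) * W3 + sg * eta * W4 + 1/2 * (eta^2 + xi) * W5\<bar>
        \<le> K * (Pre + (\<bar>W1\<bar> + sh * \<bar>W3\<bar> + sh * \<bar>W4\<bar> + (E + 1) / 2 * \<bar>W5\<bar>)) * psi"
proof -
  have d0: "0 \<le> d" using z by linarith
  have sh0: "0 \<le> sh" using s by linarith
  have E0: "0 \<le> E" using s by linarith
  have e2: "eta^2 \<le> E * d"
  proof -
    have "eta^2 = \<bar>eta\<bar> * \<bar>eta\<bar>" by (simp add: power2_eq_square abs_mult[symmetric])
    also have "\<dots> \<le> E * d" using s z by (intro mult_mono) auto
    finally show ?thesis .
  qed
  have sgsq: "\<bar>sg^2 - Sg^2\<bar> \<le> 2 * sh * d"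
  proof -
    have "sg^2 - Sg^2 = (sg + Sg) * (sg - Sg)" by (simp add: power2_eq_square algebra_simps)
    then have "\<bar>sg^2 - Sg^2\<bar> \<le> (2 * sh) * d" using s z by (metis prod_le)
    then show ?thesis by simp
  qed
  have b1: "\<bar>nu * W1\<bar> \<le> d * \<bar>W1\<bar>" using z by (intro prod_le) auto
  have b2: "\<bar>1/2 * (sg^2 - Sg^2) * W3\<bar> \<le> sh * d * \<bar>W3\<bar>"
  proof -
    have h: "\<bar>(sg^2 - Sg^2) * W3\<bar> \<le> (2 * sh * d) * \<bar>W3\<bar>" using sgsq by (intro prod_le) auto
    have "\<bar>1/2 * (sg^2 - Sg^2) * W3\<bar> = 1/2 * \<bar>(sg^2 - Sg^2) * W3\<bar>" by (simp add: abs_mult)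
    also have "\<dots> \<le> 1/2 * ((2 * sh * d) * \<bar>W3\<bar>)" using h by simp
    also have "\<dots> = sh * d * \<bar>W3\<bar>" by (simp add: algebra_simps)
    finally show ?thesis .
  qed
  have b3: "\<bar>sg * eta * W4\<bar> \<le> sh * d * \<bar>W4\<bar>" using s z by (intro prod_le) (auto simp: abs_mult intro!: mult_mono)
  have b4: "\<bar>1/2 * (eta^2 + xi) * W5\<bar> \<le> (E + 1) / 2 * d * \<bar>W5\<bar>"
  proof -
    have h: "\<bar>(eta^2 + xi) * W5\<bar> \<le> (E * d + d) * \<bar>W5\<bar>" using e2 z by (intro prod_le) auto
    have "\<bar>1/2 * (eta^2 + xi) * W5\<bar> = 1/2 * \<bar>(eta^2 + xi) * W5\<bar>" by (simp add: abs_mult)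
    also have "\<dots> \<le> 1/2 * ((E * d + d) * \<bar>W5\<bar>)" using h by simp
    also have "\<dots> = (E + 1) / 2 * d * \<bar>W5\<bar>" by (simp add: algebra_simps)
    finally show ?thesis .
  qed
  have tri: "\<bar>X + Y + Z + W\<bar> \<le> \<bar>X\<bar> + \<bar>Y\<bar> + \<bar>Z\<bar> + \<bar>W\<bar>" for X Y Z W :: real by arith
  have R0: "0 \<le> \<bar>W1\<bar> + sh * \<bar>W3\<bar> + sh * \<bar>W4\<bar> + (E + 1) / 2 * \<bar>W5\<bar>" using sh0 E0 by simp
  have "\<bar>nu * W1 + 1/2 * (sg^2 - Sg^2) * W3 + sg * eta * W4 + 1/2 * (eta^2 + xi) * W5\<bar>
      \<le> d * (\<bar>W1\<bar> + sh * \<bar>W3\<bar> + sh * \<bar>W4\<bar> + (E + 1) / 2 * \<bar>W5\<bar>)"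
  proof -
    have lin: "A \<le> M" if "A \<le> a + b + c + e" "a \<le> m1" "b \<le> m2" "c \<le> m3" "e \<le> m4" "m1 + m2 + m3 + m4 = M" for A a b c e m1 m2 m3 m4 M::real using that by linarith
    have eq: "d * \<bar>W1\<bar> + sh * d * \<bar>W3\<bar> + sh * d * \<bar>W4\<bar> + (E + 1) / 2 * d * \<bar>W5\<bar> = d * (\<bar>W1\<bar> + sh * \<bar>W3\<bar> + sh * \<bar>W4\<bar> + (E + 1) / 2 * \<bar>W5\<bar>)"
      by (simp add: algebra_simps)
    show ?thesis by (rule lin[OF tri[of "nu * W1" "1/2 * (sg^2 - Sg^2) * W3" "sg * eta * W4" "1/2 * (eta^2 + xi) * W5"] b1 b2 b3 b4 eq])
  qed
  also have "\<dots> \<le> (K * psi) * (\<bar>W1\<bar> + sh * \<bar>W3\<bar> + sh * \<bar>W4\<bar> + (E + 1) / 2 * \<bar>W5\<bar>)"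
    using dK R0 by (rule mult_right_mono)
  also have "\<dots> \<le> (K * psi) * (Pre + (\<bar>W1\<bar> + sh * \<bar>W3\<bar> + sh * \<bar>W4\<bar> + (E + 1) / 2 * \<bar>W5\<bar>))"
    using Pre K psi by (intro mult_left_mono) auto
  finally show ?thesis by (simp add: algebra_simps)
qed

lemma sq6:
  fixes K a1 a2 a3 a4 a5 a6 :: real
  shows "(K * (a1 + a2 + a3 + a4 + a5 + a6))^2 \<le> 3 * (6 * K^4 + a1^4 + a2^4 + a3^4 + a4^4 + a5^4 + a6^4)"
proof -
  have cs: "(a1 + a2 + a3 + a4 + a5 + a6)^2 \<le> 6 * (a1^2 + a2^2 + a3^2 + a4^2 + a5^2 + a6^2)"
  proof -
    have "6 * (a1^2 + a2^2 + a3^2 + a4^2 + a5^2 + a6^2) - (a1 + a2 + a3 + a4 + a5 + a6)^2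
      = (a1-a2)^2 + (a1-a3)^2 + (a1-a4)^2 + (a1-a5)^2 + (a1-a6)^2 + (a2-a3)^2 + (a2-a4)^2 + (a2-a5)^2
        + (a2-a6)^2 + (a3-a4)^2 + (a3-a5)^2 + (a3-a6)^2 + (a4-a5)^2 + (a4-a6)^2 + (a5-a6)^2"
      by (simp add: power2_eq_square algebra_simps)
    moreover have "0 \<le> (a1-a2)^2 + (a1-a3)^2 + (a1-a4)^2 + (a1-a5)^2 + (a1-a6)^2 + (a2-a3)^2 + (a2-a4)^2 + (a2-a5)^2
        + (a2-a6)^2 + (a3-a4)^2 + (a3-a5)^2 + (a3-a6)^2 + (a4-a5)^2 + (a4-a6)^2 + (a5-a6)^2" by simp
    ultimately show ?thesis by linarith
  qed
  have amgm: "2 * (K^2 * a^2) \<le> K^4 + a^4" for a :: real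
  proof -
    have "0 \<le> (K^2 - a^2)^2" by simp
    then show ?thesis by (simp add: power2_eq_square algebra_simps power4_eq_xxxx)
  qed
  have "(K * (a1 + a2 + a3 + a4 + a5 + a6))^2 = K^2 * (a1 + a2 + a3 + a4 + a5 + a6)^2" by (simp add: power_mult_distrib)
  also have "\<dots> \<le> K^2 * (6 * (a1^2 + a2^2 + a3^2 + a4^2 + a5^2 + a6^2))" using cs by (intro mult_left_mono) auto
  also have "\<dots> = 6 * (K^2 * a1^2 + K^2 * a2^2 + K^2 * a3^2 + K^2 * a4^2 + K^2 * a5^2 + K^2 * a6^2)" by (simp add: algebra_simps)
  also have "\<dots> \<le> 3 * ((K^4 + a1^4) + (K^4 + a2^4) + (K^4 + a3^4) + (K^4 + a4^4) + (K^4 + a5^4) + (K^4 + a6^4))"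
    using amgm[of a1] amgm[of a2] amgm[of a3] amgm[of a4] amgm[of a5] amgm[of a6] by (simp only: distrib_left)
  also have "\<dots> = 3 * (6 * K^4 + a1^4 + a2^4 + a3^4 + a4^4 + a5^4 + a6^4)" by (simp add: algebra_simps)
  finally show ?thesis .
qed

lemma lin6:
  fixes c0 c1 c2 c3 c4 c5 X1 X2 X3 X4 X5 C :: real
  assumes "0 \<le> X1" "0 \<le> X2" "0 \<le> X3" "0 \<le> X4" "0 \<le> X5"
    "c0 \<le> C" "c1 \<le> C" "c2 \<le> C" "c3 \<le> C" "c4 \<le> C" "c5 \<le> C"
  shows "c0 + c1 * X1 + c2 * X2 + c3 * X3 + c4 * X4 + c5 * X5 \<le> C * (1 + (X1 + X2 + X3 + X4 + X5))"
proof -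
  have "c1 * X1 \<le> C * X1" "c2 * X2 \<le> C * X2" "c3 * X3 \<le> C * X3" "c4 * X4 \<le> C * X4" "c5 * X5 \<le> C * X5"
    using assms by (auto intro: mult_right_mono)
  then show ?thesis using assms by (simp add: algebra_simps)
qed
theorem corollary5p11:
  fixes T S0 Sig0 A0 lo hi TC :: real
    and nl nh sl sh el eh xh :: real
    and pn ps pe px :: real
    and \<alpha> \<beta> \<gamma> \<delta> :: coef
    and C :: "real \<Rightarrow> real \<Rightarrow> real \<Rightarrow> real" and Cpay :: "real \<Rightarrow> real"
    and V w :: sfun and Vpay :: "real \<times> real \<times> real \<Rightarrow> real"
    and U :: "real \<Rightarrow> real"
    and Ps :: "path measure set"
    and KC K :: sfun and KV Kw :: real
  assumes T_pos: "0 < T" and S0_pos: "0 < S0" and Sig0_pos: "0 < Sig0"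
    and Sig_bounds: "0 < lo" "lo < Sig0" "Sig0 < hi"
    and Z_consts: "nl < 0" "0 < nh" "0 < sl" "sl < lo" "hi < sh" "el < 0" "0 < eh" "0 < xh"
    and Psi_pos: "0 < pn" "0 < ps" "0 < pe" "0 < px"
    and models: "\<forall>P\<in>Ps. prob_space P \<and> sets P = sets (PathSpace T S0 Sig0 A0)"
    and models_Sig: "\<forall>P\<in>Ps. AE \<omega> in P. AE t in lborel. 0 < t \<and> t < T \<longrightarrow>
                        lo \<le> stSig (Xproc \<omega> t) \<and> stSig (Xproc \<omega> t) \<le> hi"
    and call: "call_ok T TC lo hi Cpay C"
    and call_bd: "\<forall>(t, x) \<in> Dom T lo hi. pd_Sig (liftC C) t x \<noteq> 0 \<and>
                   \<bar>pd_Sig (pd_Sig (liftC C)) t x\<bar> \<le> KC t x * (\<bar>pd_Sig (liftC C) t x\<bar>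
                      + \<bar>(stS x)^2 * pd_S (pd_S (liftC C)) t x\<bar> + \<bar>stS x * pd_Sig (pd_S (liftC C)) t x\<bar>)"
    and KC_L2: "KC \<in> Lp 2 T Ps"
    and V_sol: "V_pde \<alpha> \<beta> \<gamma> \<delta> T lo hi Vpay V"
    and V_bd: "\<forall>(t, x) \<in> Dom T lo hi. \<bar>pd_Sig V t x\<bar> \<le> KV
                   \<and> \<bar>ev \<beta> t x * pd_A V t x + (stS x)^2 * GammaOp \<gamma> V t x\<bar> \<le> KV
                   \<and> \<bar>stS x * DeltaSig \<gamma> V t x\<bar> \<le> KV \<and> \<bar>pd_Sig (pd_Sig V) t x\<bar> \<le> KV"
    and w_sol: "w_pde (pn, ps, pe, px) C \<alpha> \<beta> \<gamma> \<delta> T lo hi V w"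
    and w_bd: "\<forall>(t, x) \<in> Dom T lo hi. 0 \<le> w t x \<and> w t x \<le> Kw"
    and w_L4: "pd_Sig w \<in> Lp 4 T Ps"
              "(\<lambda>t x. stS x * (pd_S w t x + ev \<gamma> t x * pd_A w t x)) \<in> Lp 4 T Ps"
              "(\<lambda>t x. ev \<beta> t x * pd_A w t x + (stS x)^2 * GammaOp \<gamma> w t x) \<in> Lp 4 T Ps"
              "(\<lambda>t x. stS x * DeltaSig \<gamma> w t x) \<in> Lp 4 T Ps"
              "pd_Sig (pd_Sig w) \<in> Lp 4 T Ps"
    and U_ok: "utility_ok U"
    and K_L4: "K \<in> Lp 4 T Ps" and K_nonneg: "\<forall>(t, x) \<in> D0 T. 0 \<le> K t x"
  shows "\<exists>K23 \<in> Lp 2 T Ps. \<forall>t x y \<zeta> \<psi>.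
           (t, x) \<in> Dom T lo hi \<and> \<zeta> \<in> Zbox nl nh sl sh el eh xh \<and> 0 < \<psi> \<and>
           norm (\<zeta> - zeta0 (stSig x)) \<le> K t x * \<psi> \<longrightarrow>
             \<bar>H2 \<beta> \<gamma> V U w \<psi> t x y \<zeta>\<bar> \<le> K23 t x * (1 + - deriv (deriv U) y / deriv U y) * \<psi>^2
           \<and> \<bar>H3 \<alpha> \<beta> \<gamma> w t x \<zeta> - H3 \<alpha> \<beta> \<gamma> w t x (zeta0 (stSig x))\<bar> \<le> K23 t x * \<psi>"
proof -
  define k where "k = \<bar>KV\<bar>"
  define E where "E = eh - el"
  define c1 where "c1 = 1 + 2 * sh + (E + 1) / 2"
  define c5 where "c5 = (E + 1) / 2"
  define W1 :: sfun where "W1 = pd_Sig w"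
  define W3 :: sfun where "W3 = (\<lambda>t x. ev \<beta> t x * pd_A w t x + (stS x)^2 * GammaOp \<gamma> w t x)"
  define W4 :: sfun where "W4 = (\<lambda>t x. stS x * DeltaSig \<gamma> w t x)"
  define W5 :: sfun where "W5 = pd_Sig (pd_Sig w)"
  define Pre :: sfun where "Pre t x = 2 * k * \<bar>K t x\<bar> + k * c1 * \<bar>Kw\<bar>" for t x
  define Rest :: sfun where "Rest t x = \<bar>W1 t x\<bar> + sh * \<bar>W3 t x\<bar> + sh * \<bar>W4 t x\<bar> + c5 * \<bar>W5 t x\<bar>" for t x
  define K23 :: sfun where "K23 t x = (if (t, x) \<in> D0 T then \<bar>K t x\<bar> * (Pre t x + Rest t x) else 0)" for t x
  have k0: "0 \<le> k" by (simp add: k_def)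
  have E0: "0 \<le> E" using Z_consts by (simp add: E_def)
  have sh0: "0 \<le> sh" using Z_consts Sig_bounds by linarith
  have c10: "0 \<le> c1" using sh0 E0 by (simp add: c1_def)
  have c50: "0 \<le> c5" using E0 by (simp add: c5_def)
  have mf: "(\<lambda>p. f (fst p) (snd p)) \<in> borel_measurable (restrict_space borel (D0 T))" if "f \<in> Lp 4 T Ps" for f
    using that unfolding Lp_def by (simp add: case_prod_beta')
  note mK[measurable] = mf[OF K_L4]
  have mW1[measurable]: "(\<lambda>p. W1 (fst p) (snd p)) \<in> borel_measurable (restrict_space borel (D0 T))"
    using mf[OF w_L4(1)] by (simp add: W1_def)
  have mW3[measurable]: "(\<lambda>p. W3 (fst p) (snd p)) \<in> borel_measurable (restrict_space borel (D0 T))"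
    using mf[OF w_L4(3)] by (simp add: W3_def)
  have mW4[measurable]: "(\<lambda>p. W4 (fst p) (snd p)) \<in> borel_measurable (restrict_space borel (D0 T))"
    using mf[OF w_L4(4)] by (simp add: W4_def)
  have mW5[measurable]: "(\<lambda>p. W5 (fst p) (snd p)) \<in> borel_measurable (restrict_space borel (D0 T))"
    using mf[OF w_L4(5)] by (simp add: W5_def)
  have K23_Lp: "K23 \<in> Lp 2 T Ps"
  proof -
    define fs :: "nat \<Rightarrow> sfun" where "fs j = (if j = 0 then K else if j = 1 then W1 else if j = 2 then W3 else if j = 3 then W4 else W5)" for j
    define C where "C = 3 * (7 + 16 * k^4 + (k * c1 * \<bar>Kw\<bar>)^4 + sh^4 + c5^4)"
    have T: "0 < T" by (rule T_pos)
    have Ps: "\<forall>P\<in>Ps. prob_space P \<and> sets P = sets (PathSpace T S0 Sig0 A0)" by (rule models)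
    have fsL: "fs j \<in> Lp 4 T Ps" if "j < 5" for j
      using that K_L4 w_L4 unfolding fs_def W1_def W3_def W4_def W5_def
      by (auto simp: less_Suc_eq numeral_eq_Suc)
    have hm: "(\<lambda>(t, x). K23 t x) \<in> borel_measurable (restrict_space borel (D0 T))"
    proof -
      have "(\<lambda>p. \<bar>K (fst p) (snd p)\<bar> * (2 * k * \<bar>K (fst p) (snd p)\<bar> + k * c1 * \<bar>Kw\<bar> +
           (\<bar>W1 (fst p) (snd p)\<bar> + sh * \<bar>W3 (fst p) (snd p)\<bar> + sh * \<bar>W4 (fst p) (snd p)\<bar> + c5 * \<bar>W5 (fst p) (snd p)\<bar>)))
         \<in> borel_measurable (restrict_space borel (D0 T))" by measurable
      then have "(\<lambda>p. K23 (fst p) (snd p)) \<in> borel_measurable (restrict_space borel (D0 T))"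
        by (rule measurable_cong[THEN iffD1, rotated])
           (auto simp: space_restrict_space K23_def Pre_def Rest_def)
      then show ?thesis by (simp add: case_prod_beta')
    qed
    have h0: "K23 t x = 0" if "(t, x) \<notin> D0 T" for t x using that by (simp add: K23_def)
    have hb: "(K23 t x)^2 \<le> C * (1 + (\<Sum>j<5. (fs j t x)^4))" if D: "(t, x) \<in> D0 T" for t x
    proof -
      have "K23 t x = \<bar>K t x\<bar> * (2 * k * \<bar>K t x\<bar> + k * c1 * \<bar>Kw\<bar> + \<bar>W1 t x\<bar> + sh * \<bar>W3 t x\<bar> + sh * \<bar>W4 t x\<bar> + c5 * \<bar>W5 t x\<bar>)"
        using D by (simp add: K23_def Pre_def Rest_def add.assoc)
      then have "(K23 t x)^2 \<le> 3 * (6 * \<bar>K t x\<bar>^4 + (2 * k * \<bar>K t x\<bar>)^4 + (k * c1 * \<bar>Kw\<bar>)^4 + \<bar>W1 t x\<bar>^4 + (sh * \<bar>W3 t x\<bar>)^4 + (sh * \<bar>W4 t x\<bar>)^4 + (c5 * \<bar>W5 t x\<bar>)^4)"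
        using sq6 by presburger
      also have "\<dots> = 3 * (k * c1 * \<bar>Kw\<bar>)^4 + (3 * (6 + 16 * k^4)) * (K t x)^4 + 3 * (W1 t x)^4 + (3 * sh^4) * (W3 t x)^4 + (3 * sh^4) * (W4 t x)^4 + (3 * c5^4) * (W5 t x)^4"
        by (simp add: power_mult_distrib abs4 algebra_simps)
      also have "\<dots> \<le> C * (1 + ((K t x)^4 + (W1 t x)^4 + (W3 t x)^4 + (W4 t x)^4 + (W5 t x)^4))"
        by (rule lin6) (auto simp: C_def)
      also have "\<dots> = C * (1 + (\<Sum>j<5. (fs j t x)^4))"
        by (simp add: numeral_eq_Suc fs_def add.assoc)
      finally show ?thesis .
    qed
    have C0: "0 \<le> C" by (simp add: C_def)
    show ?thesis by (rule Lp2_from_bound[OF T Ps fsL hm h0 hb C0])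
  qed
  show ?thesis
  proof (rule bexI[OF _ K23_Lp], intro allI impI)
    fix t x y \<zeta> \<psi>
    assume A: "(t, x) \<in> Dom T lo hi \<and> \<zeta> \<in> Zbox nl nh sl sh el eh xh \<and> 0 < \<psi> \<and>
           norm (\<zeta> - zeta0 (stSig x)) \<le> K t x * \<psi>"
    obtain nu sg eta xi where z: "\<zeta> = (nu, sg, eta, xi)" by (cases \<zeta>) auto
    define Sg where "Sg = stSig x"
    have Dm: "(t, x) \<in> Dom T lo hi" using A by simp
    have D: "(t, x) \<in> D0 T" and SgB: "lo \<le> Sg" "Sg \<le> hi" using Dm by (auto simp: Dom_def Sg_def)
    have Kn: "0 \<le> K t x" using K_nonneg D by auto
    have zb: "nl \<le> nu" "nu \<le> nh" "sl \<le> sg" "sg \<le> sh" "el \<le> eta" "eta \<le> eh" "0 \<le> xi" "xi \<le> xh"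
      using A by (auto simp: Zbox_def z)
    have psi: "0 < \<psi>" using A by simp
    define d where "d = norm (\<zeta> - zeta0 Sg)"
    have dK: "d \<le> K t x * \<psi>" using A by (simp add: d_def Sg_def)
    have dif: "\<zeta> - zeta0 Sg = (nu, sg - Sg, eta, xi)" by (simp add: z zeta0_def)
    have n1: "norm nu \<le> d" unfolding d_def dif by (rule norm_fst_le)
    have n2: "norm (sg - Sg, eta, xi) \<le> d" unfolding d_def dif by (rule norm_snd_le)
    have n3: "norm (sg - Sg) \<le> d" by (rule order_trans[OF norm_fst_le n2])
    have n4: "norm (eta, xi) \<le> d" by (rule order_trans[OF norm_snd_le n2])
    have n5: "norm eta \<le> d" by (rule order_trans[OF norm_fst_le n4])
    have n6: "norm xi \<le> d" by (rule order_trans[OF norm_snd_le n4])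
    have nb: "\<bar>nu\<bar> \<le> d" "\<bar>sg - Sg\<bar> \<le> d" "\<bar>eta\<bar> \<le> d" "xi \<le> d" using n1 n3 n5 n6 zb by auto
    have sb: "\<bar>sg\<bar> \<le> sh" "\<bar>sg + Sg\<bar> \<le> 2 * sh" "\<bar>eta\<bar> \<le> E"
      using zb SgB Sig_bounds Z_consts by (auto simp: E_def)
    define B where "B = ev \<beta> t x * pd_A V t x + (stS x)^2 * GammaOp \<gamma> V t x"
    define Dv where "Dv = stS x * DeltaSig \<gamma> V t x"
    define Vs where "Vs = pd_Sig V t x"
    define Vss where "Vss = pd_Sig (pd_Sig V) t x"
    have vb: "\<bar>B\<bar> \<le> k" "\<bar>Dv\<bar> \<le> k" "\<bar>Vs\<bar> \<le> k" "\<bar>Vss\<bar> \<le> k"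
      using V_bd Dm unfolding B_def Dv_def Vs_def Vss_def k_def by fastforce+
    have wb0: "0 \<le> w t x \<and> w t x \<le> Kw" using w_bd Dm by blast
    have wb: "0 \<le> w t x" "w t x \<le> \<bar>Kw\<bar>" using wb0 by auto
    define R where "R = - deriv (deriv U) y / deriv U y"
    have R0: "0 \<le> R" using U_ok unfolding utility_ok_def R_def
      by (metis divide_nonneg_pos neg_0_le_iff_le less_imp_le)
    have Rest0: "0 \<le> Rest t x" using sh0 c50 by (simp add: Rest_def)
    have Pre0: "0 \<le> Pre t x" using k0 c10 by (simp add: Pre_def)
    have K23e: "K23 t x = K t x * (2 * k * K t x + k * (1 + 2 * sh + (E + 1) / 2) * \<bar>Kw\<bar> + Rest t x)"
      using D Kn by (simp add: K23_def Pre_def c1_def)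
    have K23e': "K23 t x = K t x * (Pre t x + (\<bar>W1 t x\<bar> + sh * \<bar>W3 t x\<bar> + sh * \<bar>W4 t x\<bar> + (E + 1) / 2 * \<bar>W5 t x\<bar>))"
      using D Kn by (simp add: K23_def Rest_def c5_def)
    have H2eq: "H2 \<beta> \<gamma> V U w \<psi> t x y \<zeta> = - 1/2 * ((sg - Sg)^2 * B + 2 * (sg - Sg) * eta * Dv + eta^2 * Vss)
          + (- R) * (nu * Vs + 1/2 * B * (sg^2 - Sg^2) + sg * eta * Dv + 1/2 * (eta^2 + xi) * Vss) * w t x * \<psi>"
      by (simp add: H2_def bV_def z Sg_def R_def B_def Dv_def Vs_def Vss_def mult.assoc)
    have H3eq: "H3 \<alpha> \<beta> \<gamma> w t x \<zeta> - H3 \<alpha> \<beta> \<gamma> w t x (zeta0 (stSig x))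
        = nu * W1 t x + 1/2 * (sg^2 - Sg^2) * W3 t x + sg * eta * W4 t x + 1/2 * (eta^2 + xi) * W5 t x"
      by (simp add: H3_def zeta0_def z Sg_def W1_def W3_def W4_def W5_def algebra_simps)
    have "\<bar>H2 \<beta> \<gamma> V U w \<psi> t x y \<zeta>\<bar> \<le> K23 t x * (1 + R) * \<psi>^2"
      unfolding H2eq K23e
      by (rule H2_alg[OF vb nb(1-3) zb(7) nb(4) sb R0 wb dK psi Kn Rest0])
    moreover have "\<bar>H3 \<alpha> \<beta> \<gamma> w t x \<zeta> - H3 \<alpha> \<beta> \<gamma> w t x (zeta0 (stSig x))\<bar> \<le> K23 t x * \<psi>"
      unfolding H3eq K23e'
      by (rule H3_alg[OF nb(1-3) zb(7) nb(4) sb dK psi Kn Pre0])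
    ultimately show "\<bar>H2 \<beta> \<gamma> V U w \<psi> t x y \<zeta>\<bar> \<le> K23 t x * (1 + - deriv (deriv U) y / deriv U y) * \<psi>^2
           \<and> \<bar>H3 \<alpha> \<beta> \<gamma> w t x \<zeta> - H3 \<alpha> \<beta> \<gamma> w t x (zeta0 (stSig x))\<bar> \<le> K23 t x * \<psi>"
      by (simp add: R_def)
  qed
qed
end
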